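(* Let $K$ be a field, $m\ge2$, $d_1,\ldots,d_m$ positive integers, and $I_2(D)\subset K[x_1,\ldots,x_m,y_1,\ldots,y_m]$ the ideal generated by the $2$-minors of $D=\begin{pmatrix}x_1^{d_1}&\cdots&x_m^{d_m}\\ y_1^{d_1}&\cdots&y_m^{d_m}\end{pmatrix}$. Then $I_2(D)$ is prime if and only if $\gcd(d_i,d_j)=1$ for every $1\le i<j\le m$. *)

theory Defs
  imports "HOL-Library.Poly_Mapping"
begin

text \<open>Multivariate polynomials over a commutative ring 'a in variables of type 'v:
  a polynomial is a finitely supported map from monomials (finitely supported
  exponent vectors) to coefficients; multiplication is convolution.\<close>

type_synonym ('v, 'a) mpoly = "('v \<Rightarrow>\<^sub>0 nat) \<Rightarrow>\<^sub>0 'a"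

definition var_pow :: "'v \<Rightarrow> nat \<Rightarrow> ('v, 'a::comm_ring_1) mpoly" where
  "var_pow v k = Poly_Mapping.single (Poly_Mapping.single v k) 1"

definition polys_in_vars :: "'v set \<Rightarrow> ('v, 'a::comm_ring_1) mpoly set" where
  "polys_in_vars V = {p. \<forall>t\<in>Poly_Mapping.keys p. Poly_Mapping.keys t \<subseteq> V}"

definition ideal_gen_in :: "'r::comm_ring_1 set \<Rightarrow> 'r set \<Rightarrow> 'r set" where
  "ideal_gen_in R G = {p. \<exists>F c. finite F \<and> F \<subseteq> G \<and> (\<forall>g\<in>F. c g \<in> R) \<and> p = (\<Sum>g\<in>F. c g * g)}"

text \<open>A prime ideal I of the ring R (I is assumed to be an ideal of R).\<close>
definition prime_ideal_in :: "'r::comm_ring_1 set \<Rightarrow> 'r set \<Rightarrow> bool" where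
  "prime_ideal_in R I \<longleftrightarrow> I \<subseteq> R \<and> 1 \<notin> I \<and> (\<forall>a\<in>R. \<forall>b\<in>R. a * b \<in> I \<longrightarrow> a \<in> I \<or> b \<in> I)"

text \<open>Variables: Inl i stands for x_i, Inr i for y_i.\<close>
definition xy_vars :: "nat \<Rightarrow> (nat + nat) set" where
  "xy_vars m = Inl ` {1..m} \<union> Inr ` {1..m}"

definition minors2 :: "nat \<Rightarrow> (nat \<Rightarrow> nat) \<Rightarrow> (nat + nat, 'a::comm_ring_1) mpoly set" where
  "minors2 m d = {var_pow (Inl i) (d i) * var_pow (Inr j) (d j) - var_pow (Inl j) (d j) * var_pow (Inr i) (d i)
                  | i j. 1 \<le> i \<and> i < j \<and> j \<le> m}"

end

theory Submission
  imports Defs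
begin

lemma poly_expand:
  "p = (\<Sum>t\<in>Poly_Mapping.keys p. Poly_Mapping.single t (Poly_Mapping.lookup p t))"
  by (rule poly_mapping_eqI) (auto simp: lookup_sum lookup_single when_def in_keys_iff sum.delta)

definition phi :: "('k \<Rightarrow> 'l) \<Rightarrow> ('k \<Rightarrow>\<^sub>0 'b::comm_monoid_add) \<Rightarrow> ('l \<Rightarrow>\<^sub>0 'b)" where
  "phi \<psi> p = (\<Sum>t\<in>Poly_Mapping.keys p. Poly_Mapping.single (\<psi> t) (Poly_Mapping.lookup p t))"

lemma phi_superset:
  assumes "finite S" "Poly_Mapping.keys p \<subseteq> S"
  shows "phi \<psi> p = (\<Sum>t\<in>S. Poly_Mapping.single (\<psi> t) (Poly_Mapping.lookup p t))"
  unfolding phi_def by (rule sum.mono_neutral_left) (use assms in \<open>auto simp: in_keys_iff\<close>)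

lemma phi_add: "phi \<psi> (p + q) = phi \<psi> p + phi \<psi> q"
proof -
  let ?S = "Poly_Mapping.keys p \<union> Poly_Mapping.keys q"
  have "phi \<psi> (p + q) = (\<Sum>t\<in>?S. Poly_Mapping.single (\<psi> t) (Poly_Mapping.lookup (p+q) t))"
    by (rule phi_superset) (use keys_add[of p q] in auto)
  also have "\<dots> = (\<Sum>t\<in>?S. Poly_Mapping.single (\<psi> t) (Poly_Mapping.lookup p t))
     + (\<Sum>t\<in>?S. Poly_Mapping.single (\<psi> t) (Poly_Mapping.lookup q t))"
    by (simp add: lookup_add single_add sum.distrib)
  also have "\<dots> = phi \<psi> p + phi \<psi> q"
    by (subst (1 2) phi_superset[of ?S]) auto
  finally show ?thesis .
qed

lemma phi_zero [simp]: "phi \<psi> 0 = 0"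
  by (simp add: phi_def)

lemma phi_single [simp]: "phi \<psi> (Poly_Mapping.single t c) = Poly_Mapping.single (\<psi> t) c"
  by (simp add: phi_def)

lemma phi_uminus: "phi \<psi> (- (p :: 'k \<Rightarrow>\<^sub>0 'b::ab_group_add)) = - phi \<psi> p"
  by (simp add: phi_def single_uminus sum_negf)

lemma phi_diff: "phi \<psi> ((p :: 'k \<Rightarrow>\<^sub>0 'b::ab_group_add) - q) = phi \<psi> p - phi \<psi> q"
  using phi_add[of \<psi> p "-q"] by (simp add: phi_uminus)

lemma phi_sum: "phi \<psi> (\<Sum>i\<in>A. f i) = (\<Sum>i\<in>A. phi \<psi> (f i))"
  by (induction A rule: infinite_finite_induct) (auto simp: phi_add)

lemma phi_mult:
  fixes p q :: "('k::monoid_add) \<Rightarrow>\<^sub>0 ('b::comm_semiring_1)"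
  assumes hom: "\<And>s t. \<psi> (s + t) = (\<psi> s + \<psi> t :: 'l::monoid_add)"
  shows "phi \<psi> (p * q) = phi \<psi> p * phi \<psi> q"
proof -
  have "p * q = (\<Sum>s\<in>Poly_Mapping.keys p. Poly_Mapping.single s (Poly_Mapping.lookup p s)) *
               (\<Sum>t\<in>Poly_Mapping.keys q. Poly_Mapping.single t (Poly_Mapping.lookup q t))"
    by (subst (1) poly_expand, subst (1) poly_expand[of q]) (rule refl)
  also have "\<dots> = (\<Sum>s\<in>Poly_Mapping.keys p. \<Sum>t\<in>Poly_Mapping.keys q.
       Poly_Mapping.single (s + t) (Poly_Mapping.lookup p s * Poly_Mapping.lookup q t))"
    by (simp add: sum_product mult_single)
  finally have "phi \<psi> (p * q) = (\<Sum>s\<in>Poly_Mapping.keys p. \<Sum>t\<in>Poly_Mapping.keys q.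
       Poly_Mapping.single (\<psi> s + \<psi> t) (Poly_Mapping.lookup p s * Poly_Mapping.lookup q t))"
    by (simp add: phi_sum hom)
  also have "\<dots> = phi \<psi> p * phi \<psi> q"
    by (simp add: phi_def sum_product mult_single)
  finally show ?thesis .
qed

lemma idom_test: "(p::(nat \<Rightarrow>\<^sub>0 nat) \<Rightarrow>\<^sub>0 'a::field) * q = 0 \<Longrightarrow> p = 0 \<or> q = 0"
  by simp


lemma R_zero [simp]: "0 \<in> polys_in_vars V"
  by (simp add: polys_in_vars_def)

lemma R_single: "Poly_Mapping.keys t \<subseteq> V \<Longrightarrow> Poly_Mapping.single t c \<in> polys_in_vars V"
  by (simp add: polys_in_vars_def)

lemma R_one [simp]: "1 \<in> polys_in_vars V"
  by (simp add: polys_in_vars_def)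

lemma R_const: "Poly_Mapping.single 0 c \<in> polys_in_vars V"
  by (simp add: R_single)

lemma R_add: "p \<in> polys_in_vars V \<Longrightarrow> q \<in> polys_in_vars V \<Longrightarrow> p + q \<in> polys_in_vars V"
  unfolding polys_in_vars_def using keys_add[of p q] by blast

lemma R_uminus: "p \<in> polys_in_vars V \<Longrightarrow> - (p::('v,'a::comm_ring_1) mpoly) \<in> polys_in_vars V"
  unfolding polys_in_vars_def by simp

lemma R_diff: "p \<in> polys_in_vars V \<Longrightarrow> q \<in> polys_in_vars V \<Longrightarrow> (p::('v,'a::comm_ring_1) mpoly) - q \<in> polys_in_vars V"
  unfolding polys_in_vars_def using keys_diff[of p q] by blast

lemma R_mult:
  assumes "p \<in> polys_in_vars V" "q \<in> polys_in_vars V"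
  shows "(p::('v,'a::comm_ring_1) mpoly) * q \<in> polys_in_vars V"
  unfolding polys_in_vars_def mem_Collect_eq
proof (intro ballI)
  fix t assume "t \<in> Poly_Mapping.keys (p * q)"
  then obtain a b where "t = a + b" "a \<in> Poly_Mapping.keys p" "b \<in> Poly_Mapping.keys q"
    using keys_mult[of p q] by blast
  then show "Poly_Mapping.keys t \<subseteq> V"
    using assms keys_add[of a b] unfolding polys_in_vars_def by blast
qed

lemma R_sum: "(\<And>i. i \<in> A \<Longrightarrow> f i \<in> polys_in_vars V) \<Longrightarrow> (\<Sum>i\<in>A. f i) \<in> polys_in_vars V"
  by (induction A rule: infinite_finite_induct) (auto intro: R_add)

lemma R_pow: "p \<in> polys_in_vars V \<Longrightarrow> (p::('v,'a::comm_ring_1) mpoly) ^ n \<in> polys_in_vars V"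
  by (induction n) (auto intro: R_mult)

lemma R_var_pow: "v \<in> V \<Longrightarrow> (var_pow v k :: ('v,'a::comm_ring_1) mpoly) \<in> polys_in_vars V"
  unfolding var_pow_def by (rule R_single) simp

lemma I_zero [simp]: "0 \<in> ideal_gen_in R G"
  unfolding ideal_gen_in_def by (rule CollectI, rule exI[of _ "{}"]) auto

lemma I_gen: "g \<in> G \<Longrightarrow> c \<in> R \<Longrightarrow> c * g \<in> ideal_gen_in R G"
  unfolding ideal_gen_in_def by (rule CollectI, rule exI[of _ "{g}"], rule exI[of _ "\<lambda>_. c"]) auto

lemma I_add:
  assumes "p \<in> ideal_gen_in (polys_in_vars V) G" "q \<in> ideal_gen_in (polys_in_vars V) G"
  shows "p + q \<in> ideal_gen_in (polys_in_vars V) G"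
proof -
  obtain F1 c1 where F1: "finite F1" "F1 \<subseteq> G" "\<forall>g\<in>F1. c1 g \<in> polys_in_vars V" "p = (\<Sum>g\<in>F1. c1 g * g)"
    using assms(1) unfolding ideal_gen_in_def by blast
  obtain F2 c2 where F2: "finite F2" "F2 \<subseteq> G" "\<forall>g\<in>F2. c2 g \<in> polys_in_vars V" "q = (\<Sum>g\<in>F2. c2 g * g)"
    using assms(2) unfolding ideal_gen_in_def by blast
  define c where "c g = (if g \<in> F1 then c1 g else 0) + (if g \<in> F2 then c2 g else 0)" for g
  have "(\<Sum>g\<in>F1 \<union> F2. c g * g) = (\<Sum>g\<in>F1 \<union> F2. (if g \<in> F1 then c1 g * g else 0))
      + (\<Sum>g\<in>F1 \<union> F2. (if g \<in> F2 then c2 g * g else 0))"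
  proof -
    have "c g * g = (if g \<in> F1 then c1 g * g else 0) + (if g \<in> F2 then c2 g * g else 0)" for g
      by (simp add: c_def distrib_right)
    then show ?thesis by (simp only: sum.distrib)
  qed
  also have "\<dots> = p + q"
  proof -
    have e1: "(F1 \<union> F2) \<inter> F1 = F1" "(F1 \<union> F2) \<inter> F2 = F2" by blast+
    have "(\<Sum>g\<in>F1 \<union> F2. (if g \<in> F1 then c1 g * g else 0)) = p"
      by (subst sum.inter_restrict[symmetric]) (use F1 F2 e1 in simp_all)
    moreover have "(\<Sum>g\<in>F1 \<union> F2. (if g \<in> F2 then c2 g * g else 0)) = q"
      by (subst sum.inter_restrict[symmetric]) (use F1 F2 e1 in simp_all)
    ultimately show ?thesis by simp
  qed
  finally have "p + q = (\<Sum>g\<in>F1 \<union> F2. c g * g)" by simp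
  moreover have "\<forall>g\<in>F1 \<union> F2. c g \<in> polys_in_vars V"
    using F1 F2 unfolding c_def by (auto intro!: R_add simp del: )
  ultimately show ?thesis using F1 F2 unfolding ideal_gen_in_def mem_Collect_eq
    by (intro exI[of _ "F1 \<union> F2"] exI[of _ c]) auto
qed

lemma I_mult:
  assumes "r \<in> polys_in_vars V" "p \<in> ideal_gen_in (polys_in_vars V) G"
  shows "r * (p::('v,'a::comm_ring_1) mpoly) \<in> ideal_gen_in (polys_in_vars V) G"
proof -
  obtain F c where F: "finite F" "F \<subseteq> G" "\<forall>g\<in>F. c g \<in> polys_in_vars V" "p = (\<Sum>g\<in>F. c g * g)"
    using assms(2) unfolding ideal_gen_in_def by blast
  have "r * p = (\<Sum>g\<in>F. (r * c g) * g)"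
    using F by (simp add: sum_distrib_left mult.assoc)
  moreover have "\<forall>g\<in>F. r * c g \<in> polys_in_vars V" using F assms(1) by (auto intro: R_mult)
  ultimately show ?thesis using F unfolding ideal_gen_in_def mem_Collect_eq
    by (intro exI[of _ F] exI[of _ "\<lambda>g. r * c g"]) auto
qed

lemma I_uminus:
  assumes "p \<in> ideal_gen_in (polys_in_vars V) G"
  shows "- (p::('v,'a::comm_ring_1) mpoly) \<in> ideal_gen_in (polys_in_vars V) G"
  using I_mult[OF R_uminus[OF R_one] assms] by simp

lemma I_diff:
  assumes "p \<in> ideal_gen_in (polys_in_vars V) G" "q \<in> ideal_gen_in (polys_in_vars V) G"
  shows "(p::('v,'a::comm_ring_1) mpoly) - q \<in> ideal_gen_in (polys_in_vars V) G"
  using I_add[OF assms(1) I_uminus[OF assms(2)]] by simp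

lemma I_sum:
  "(\<And>i. i \<in> A \<Longrightarrow> f i \<in> ideal_gen_in (polys_in_vars V) G) \<Longrightarrow> (\<Sum>i\<in>A. f i) \<in> ideal_gen_in (polys_in_vars V) G"
  by (induction A rule: infinite_finite_induct) (auto intro: I_add)

lemma I_subset_R:
  assumes "G \<subseteq> polys_in_vars V"
  shows "ideal_gen_in (polys_in_vars V) G \<subseteq> polys_in_vars V"
proof
  fix p assume "p \<in> ideal_gen_in (polys_in_vars V) G"
  then obtain F c where F: "finite F" "F \<subseteq> G" "\<forall>g\<in>F. c g \<in> polys_in_vars V" "p = (\<Sum>g\<in>F. c g * g)"
    unfolding ideal_gen_in_def by blast
  then show "p \<in> polys_in_vars V" using assms by (auto intro!: R_sum R_mult)
qed

lemma phi_I: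
  assumes hom: "\<And>s t. \<psi> (s + t) = (\<psi> s + \<psi> t :: 'l::monoid_add)"
    and kill: "\<And>g. g \<in> G \<Longrightarrow> phi \<psi> g = 0"
    and "p \<in> ideal_gen_in R G"
  shows "phi \<psi> (p :: ('k::comm_monoid_add) \<Rightarrow>\<^sub>0 ('b::comm_ring_1)) = 0"
proof -
  obtain F c where F: "finite F" "F \<subseteq> G" "p = (\<Sum>g\<in>F. c g * g)"
    using assms(3) unfolding ideal_gen_in_def by blast
  have "phi \<psi> p = (\<Sum>g\<in>F. phi \<psi> (c g) * phi \<psi> g)"
    by (simp only: F(3) phi_sum phi_mult[OF hom])
  also have "\<dots> = 0" using F kill by (intro sum.neutral) auto
  finally show ?thesis .
qed


definition eP :: "nat \<Rightarrow> (nat \<Rightarrow> nat) \<Rightarrow> nat \<Rightarrow> nat" where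
  "eP m d i = (\<Prod>k\<in>{1..m}-{i}. d k)"

definition psi :: "nat \<Rightarrow> (nat \<Rightarrow> nat) \<Rightarrow> (nat + nat \<Rightarrow>\<^sub>0 nat) \<Rightarrow> (nat \<Rightarrow>\<^sub>0 nat)" where
  "psi m d t = Poly_Mapping.single 0 (\<Sum>i\<in>{1..m}. eP m d i * Poly_Mapping.lookup t (Inl i))
     + Poly_Mapping.single 1 (\<Sum>i\<in>{1..m}. eP m d i * Poly_Mapping.lookup t (Inr i))
     + (\<Sum>i\<in>{1..m}. Poly_Mapping.single (Suc i) (Poly_Mapping.lookup t (Inl i) + Poly_Mapping.lookup t (Inr i)))"

lemma psi_add: "psi m d (s + t) = psi m d s + psi m d t"
  by (simp add: psi_def lookup_add algebra_simps sum.distrib single_add)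

lemma psi_zero [simp]: "psi m d 0 = 0"
  by (simp add: psi_def)

lemma psi_Inl:
  assumes "i \<in> {1..m}"
  shows "psi m d (Poly_Mapping.single (Inl i) a) = Poly_Mapping.single 0 (eP m d i * a) + Poly_Mapping.single (Suc i) a"
proof -
  have "(\<Sum>k\<in>{1..m}. eP m d k * Poly_Mapping.lookup (Poly_Mapping.single (Inl i) a) (Inl k)) = eP m d i * a"
  proof -
    have "\<And>k. eP m d k * (if i = k then a else 0) = (if i = k then eP m d i * a else 0)" by simp
    then show ?thesis using assms by (simp add: lookup_single when_def sum.delta)
  qed
  moreover have "(\<Sum>k\<in>{1..m}. Poly_Mapping.single (Suc k) (Poly_Mapping.lookup (Poly_Mapping.single (Inl i) a) (Inl k)
      + Poly_Mapping.lookup (Poly_Mapping.single (Inl i) a) (Inr k))) = Poly_Mapping.single (Suc i) a"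
  proof -
    have "\<And>k. Poly_Mapping.single (Suc k) (if i = k then a else 0) = (if i = k then Poly_Mapping.single (Suc i) a else 0)" by simp
    then show ?thesis using assms by (simp add: lookup_single when_def sum.delta)
  qed
  ultimately show ?thesis by (simp add: psi_def lookup_single)
qed

lemma psi_Inr:
  assumes "i \<in> {1..m}"
  shows "psi m d (Poly_Mapping.single (Inr i) a) = Poly_Mapping.single 1 (eP m d i * a) + Poly_Mapping.single (Suc i) a"
proof -
  have "(\<Sum>k\<in>{1..m}. eP m d k * Poly_Mapping.lookup (Poly_Mapping.single (Inr i) a) (Inr k)) = eP m d i * a"
  proof -
    have "\<And>k. eP m d k * (if i = k then a else 0) = (if i = k then eP m d i * a else 0)" by simp
    then show ?thesis using assms by (simp add: lookup_single when_def sum.delta)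
  qed
  moreover have "(\<Sum>k\<in>{1..m}. Poly_Mapping.single (Suc k) (Poly_Mapping.lookup (Poly_Mapping.single (Inr i) a) (Inl k)
      + Poly_Mapping.lookup (Poly_Mapping.single (Inr i) a) (Inr k))) = Poly_Mapping.single (Suc i) a"
  proof -
    have "\<And>k. Poly_Mapping.single (Suc k) (if i = k then a else 0) = (if i = k then Poly_Mapping.single (Suc i) a else 0)" by simp
    then show ?thesis using assms by (simp add: lookup_single when_def sum.delta)
  qed
  ultimately show ?thesis by (simp add: psi_def lookup_single)
qed

lemma eP_mult: "i \<in> {1..m} \<Longrightarrow> eP m d i * d i = (\<Prod>k\<in>{1..m}. d k)"
  unfolding eP_def by (simp add: prod.remove mult.commute)

lemma lookup_psi_0: "Poly_Mapping.lookup (psi m d t) 0 = (\<Sum>i\<in>{1..m}. eP m d i * Poly_Mapping.lookup t (Inl i))"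
  by (simp add: psi_def lookup_add lookup_sum lookup_single)

lemma lookup_psi_Suc: "k \<in> {1..m} \<Longrightarrow>
   Poly_Mapping.lookup (psi m d t) (Suc k) = Poly_Mapping.lookup t (Inl k) + Poly_Mapping.lookup t (Inr k)"
  by (simp add: psi_def lookup_add lookup_sum lookup_single when_def sum.delta)


lemma var_pow_mult: "var_pow v k * var_pow w l =
   (Poly_Mapping.single (Poly_Mapping.single v k + Poly_Mapping.single w l) 1 :: ('v,'a::comm_ring_1) mpoly)"
  by (simp add: var_pow_def mult_single)

lemma phi_kill:
  assumes "g \<in> minors2 m d"
  shows "phi (psi m d) (g :: (nat + nat, 'a::comm_ring_1) mpoly) = 0"
proof -
  obtain i j where ij: "1 \<le> i" "i < j" "j \<le> m"
    and g: "g = var_pow (Inl i) (d i) * var_pow (Inr j) (d j) - var_pow (Inl j) (d j) * var_pow (Inr i) (d i)"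
    using assms unfolding minors2_def by blast
  have i: "i \<in> {1..m}" and j: "j \<in> {1..m}" using ij by auto
  have "psi m d (Poly_Mapping.single (Inl i) (d i) + Poly_Mapping.single (Inr j) (d j))
      = psi m d (Poly_Mapping.single (Inl j) (d j) + Poly_Mapping.single (Inr i) (d i))"
    by (simp add: psi_add psi_Inl[OF i] psi_Inl[OF j] psi_Inr[OF i] psi_Inr[OF j] eP_mult[OF i] eP_mult[OF j] add_ac)
  then show ?thesis by (simp add: g var_pow_mult phi_diff)
qed

definition stdm :: "nat \<Rightarrow> (nat \<Rightarrow> nat) \<Rightarrow> (nat + nat \<Rightarrow>\<^sub>0 nat) \<Rightarrow> bool" where
  "stdm m d t \<longleftrightarrow> \<not> (\<exists>i j. 1 \<le> i \<and> i < j \<and> j \<le> m \<and> d i \<le> Poly_Mapping.lookup t (Inl i) \<and> d j \<le> Poly_Mapping.lookup t (Inr j))"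

locale cop =
  fixes m :: nat and d :: "nat \<Rightarrow> nat"
  assumes cop: "\<And>i j. 1 \<le> i \<Longrightarrow> i < j \<Longrightarrow> j \<le> m \<Longrightarrow> gcd (d i) (d j) = 1"
    and dpos: "\<And>i. 1 \<le> i \<Longrightarrow> i \<le> m \<Longrightarrow> d i > 0"
begin

lemma coprime_eP: "k \<in> {1..m} \<Longrightarrow> coprime (d k) (eP m d k)"
  unfolding eP_def
proof (rule coprime_commute[THEN iffD1], rule prod_coprime_left)
  fix i assume k: "k \<in> {1..m}" and i: "i \<in> {1..m} - {k}"
  then have "i < k \<or> k < i" by auto
  then show "coprime (d i) (d k)"
    using cop[of i k] cop[of k i] i k by (auto simp: coprime_iff_gcd_eq_1 gcd.commute)
qed

lemma eP_pos: "eP m d k > 0"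
  unfolding eP_def using dpos by (auto intro!: prod_pos)

lemma sum_mod:
  assumes k: "k \<in> {1..m}"
  shows "(\<Sum>i\<in>{1..m}. eP m d i * f i) mod d k = (eP m d k * f k) mod d k"
proof -
  have "(\<Sum>i\<in>{1..m}. eP m d i * f i) = eP m d k * f k + (\<Sum>i\<in>{1..m}-{k}. eP m d i * f i)"
    using k by (simp add: sum.remove)
  moreover have "d k dvd (\<Sum>i\<in>{1..m}-{k}. eP m d i * f i)"
  proof (rule dvd_sum)
    fix i assume "i \<in> {1..m} - {k}"
    then have "d k dvd eP m d i" unfolding eP_def using k by (intro dvd_prodI) auto
    then show "d k dvd eP m d i * f i" by simp
  qed
  then obtain q where "(\<Sum>i\<in>{1..m}-{k}. eP m d i * f i) = d k * q" by blast
  ultimately show ?thesis by simp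
qed

lemma psi_big:
  assumes eq: "psi m d s = psi m d t" and k: "k \<in> {1..m}"
    and lt: "Poly_Mapping.lookup t (Inl k) < Poly_Mapping.lookup s (Inl k)"
  shows "d k \<le> Poly_Mapping.lookup s (Inl k) \<and> d k \<le> Poly_Mapping.lookup t (Inr k)"
proof -
  let ?a = "Poly_Mapping.lookup s (Inl k)" and ?a' = "Poly_Mapping.lookup t (Inl k)"
  have A: "(\<Sum>i\<in>{1..m}. eP m d i * Poly_Mapping.lookup s (Inl i)) = (\<Sum>i\<in>{1..m}. eP m d i * Poly_Mapping.lookup t (Inl i))"
    using arg_cong[OF eq, of "\<lambda>x. Poly_Mapping.lookup x 0"] by (simp add: lookup_psi_0)
  have g: "?a + Poly_Mapping.lookup s (Inr k) = ?a' + Poly_Mapping.lookup t (Inr k)"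
    using arg_cong[OF eq, of "\<lambda>x. Poly_Mapping.lookup x (Suc k)"] k by (simp add: lookup_psi_Suc)
  have "(eP m d k * ?a) mod d k = (eP m d k * ?a') mod d k"
    using A sum_mod[OF k, of "\<lambda>i. Poly_Mapping.lookup s (Inl i)"] sum_mod[OF k, of "\<lambda>i. Poly_Mapping.lookup t (Inl i)"]
    by simp
  then have "d k dvd eP m d k * ?a - eP m d k * ?a'"
    using lt by (subst mod_eq_dvd_iff_nat[symmetric]) auto
  then have "d k dvd eP m d k * (?a - ?a')" by (simp add: diff_mult_distrib2)
  then have "d k dvd ?a - ?a'" using coprime_dvd_mult_right_iff[OF coprime_eP[OF k]] by simp
  then have "d k \<le> ?a - ?a'" using lt by (intro dvd_imp_le) auto
  then show ?thesis using g by auto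
qed

lemma psi_inj:
  assumes s: "Poly_Mapping.keys s \<subseteq> xy_vars m" "stdm m d s"
    and t: "Poly_Mapping.keys t \<subseteq> xy_vars m" "stdm m d t"
    and eq: "psi m d s = psi m d t"
  shows "s = t"
proof -
  let ?a = "\<lambda>k. Poly_Mapping.lookup s (Inl k)" and ?a' = "\<lambda>k. Poly_Mapping.lookup t (Inl k)"
  have A: "(\<Sum>i\<in>{1..m}. eP m d i * ?a i) = (\<Sum>i\<in>{1..m}. eP m d i * ?a' i)"
    using arg_cong[OF eq, of "\<lambda>x. Poly_Mapping.lookup x 0"] by (simp add: lookup_psi_0)
  have g: "\<And>k. k \<in> {1..m} \<Longrightarrow> ?a k + Poly_Mapping.lookup s (Inr k) = ?a' k + Poly_Mapping.lookup t (Inr k)"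
    using eq by (metis lookup_psi_Suc)
  have aeq: "?a k = ?a' k" if k: "k \<in> {1..m}" for k
  proof (rule ccontr)
    assume ne: "?a k \<noteq> ?a' k"
    have "\<exists>p\<in>{1..m}. ?a' p < ?a p"
    proof (rule ccontr)
      assume H: "\<not> ?thesis"
      then have "\<forall>p\<in>{1..m}. eP m d p * ?a p \<le> eP m d p * ?a' p" by auto
      moreover have "eP m d k * ?a k < eP m d k * ?a' k"
      proof -
        have "\<not> ?a' k < ?a k" using H k by blast
        then have "?a k < ?a' k" using ne by linarith
        then show ?thesis using eP_pos[of k] by simp
      qed
      ultimately have "(\<Sum>i\<in>{1..m}. eP m d i * ?a i) < (\<Sum>i\<in>{1..m}. eP m d i * ?a' i)"
        using k by (intro sum_strict_mono_ex1) auto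
      then show False using A by simp
    qed
    then obtain p where p: "p \<in> {1..m}" "?a' p < ?a p" by blast
    have "\<exists>n\<in>{1..m}. ?a n < ?a' n"
    proof (rule ccontr)
      assume H: "\<not> ?thesis"
      then have "\<forall>p\<in>{1..m}. eP m d p * ?a' p \<le> eP m d p * ?a p" by auto
      moreover have "eP m d k * ?a' k < eP m d k * ?a k"
      proof -
        have "\<not> ?a k < ?a' k" using H k by blast
        then have "?a' k < ?a k" using ne by linarith
        then show ?thesis using eP_pos[of k] by simp
      qed
      ultimately have "(\<Sum>i\<in>{1..m}. eP m d i * ?a' i) < (\<Sum>i\<in>{1..m}. eP m d i * ?a i)"
        using k by (intro sum_strict_mono_ex1) auto
      then show False using A by simp
    qed
    then obtain n where n: "n \<in> {1..m}" "?a n < ?a' n" by blast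
    have bp: "d p \<le> ?a p \<and> d p \<le> Poly_Mapping.lookup t (Inr p)" by (rule psi_big[OF eq p])
    have bn: "d n \<le> ?a' n \<and> d n \<le> Poly_Mapping.lookup s (Inr n)" by (rule psi_big[OF eq[symmetric] n])
    have "p \<noteq> n" using p(2) n(2) by auto
    then have "p < n \<or> n < p" by linarith
    then show False
    proof
      assume "p < n" then show False using s(2) bp bn p n unfolding stdm_def by auto
    next
      assume "n < p" then show False using t(2) bp bn p n unfolding stdm_def by auto
    qed
  qed
  show "s = t"
  proof (rule poly_mapping_eqI)
    fix x
    show "Poly_Mapping.lookup s x = Poly_Mapping.lookup t x"
    proof (cases "x \<in> xy_vars m")
      case True
      then obtain k where k: "k \<in> {1..m}" "x = Inl k \<or> x = Inr k" unfolding xy_vars_def by auto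
      then show ?thesis using aeq[OF k(1)] g[OF k(1)] by auto
    next
      case False
      then have "x \<notin> Poly_Mapping.keys s" "x \<notin> Poly_Mapping.keys t" using s(1) t(1) by blast+
      then show ?thesis by (simp add: in_keys_iff)
    qed
  qed
qed

lemma phi_inj:
  assumes std: "\<And>t. t \<in> Poly_Mapping.keys p \<Longrightarrow> Poly_Mapping.keys t \<subseteq> xy_vars m \<and> stdm m d t"
    and z: "phi (psi m d) (p :: (nat + nat, 'a::comm_ring_1) mpoly) = 0"
  shows "p = 0"
proof (rule ccontr)
  assume "p \<noteq> 0"
  then obtain t where t: "t \<in> Poly_Mapping.keys p" by (metis keys_eq_empty equals0I)
  have "Poly_Mapping.lookup (phi (psi m d) p) (psi m d t)
     = (\<Sum>u\<in>Poly_Mapping.keys p. (if u = t then Poly_Mapping.lookup p t else 0))"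
    unfolding phi_def lookup_sum
  proof (rule sum.cong)
    fix u assume u: "u \<in> Poly_Mapping.keys p"
    have "psi m d u = psi m d t \<longleftrightarrow> u = t"
      using psi_inj std[OF u] std[OF t] by blast
    then show "Poly_Mapping.lookup (Poly_Mapping.single (psi m d u) (Poly_Mapping.lookup p u)) (psi m d t)
        = (if u = t then Poly_Mapping.lookup p t else 0)"
      by (auto simp: lookup_single when_def)
  qed simp
  also have "\<dots> = Poly_Mapping.lookup p t" using t by (simp add: sum.delta)
  finally show False using z t by (simp add: in_keys_iff)
qed

end


definition mu :: "nat \<Rightarrow> (nat \<Rightarrow> nat) \<Rightarrow> (nat + nat \<Rightarrow>\<^sub>0 nat) \<Rightarrow> nat" where
  "mu m d t = (\<Sum>k\<in>{1..m}. (m + 1 - k) * eP m d k * Poly_Mapping.lookup t (Inl k))"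

lemma mu_add: "mu m d (s + t) = mu m d s + mu m d t"
  by (simp add: mu_def lookup_add distrib_left sum.distrib)

lemma mu_Inl: "i \<in> {1..m} \<Longrightarrow> mu m d (Poly_Mapping.single (Inl i) a) = (m + 1 - i) * eP m d i * a"
  by (simp add: mu_def lookup_single when_def if_distrib sum.delta cong: if_cong)

lemma mu_Inr: "mu m d (Poly_Mapping.single (Inr i) a) = 0"
  by (simp add: mu_def lookup_single)

definition stdp :: "nat \<Rightarrow> (nat \<Rightarrow> nat) \<Rightarrow> (nat + nat, 'a::comm_ring_1) mpoly \<Rightarrow> bool" where
  "stdp m d p \<longleftrightarrow> p \<in> polys_in_vars (xy_vars m) \<and> (\<forall>u\<in>Poly_Mapping.keys p. stdm m d u)"

lemma stdp_sum: "(\<And>i. i \<in> A \<Longrightarrow> stdp m d (f i)) \<Longrightarrow> stdp m d (\<Sum>i\<in>A. f i)"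
  unfolding stdp_def using keys_sum[of f A] by (auto intro!: R_sum)

lemma stdp_const_mult:
  assumes "stdp m d p" shows "stdp m d (Poly_Mapping.single 0 c * p)"
proof -
  have "Poly_Mapping.keys (Poly_Mapping.single 0 c * p) \<subseteq> Poly_Mapping.keys p"
    using keys_mult[of "Poly_Mapping.single 0 c" p] by (auto split: if_splits)
  then show ?thesis using assms unfolding stdp_def by (auto intro: R_mult R_const)
qed

context cop
begin

lemma nf_mon:
  assumes "Poly_Mapping.keys t \<subseteq> xy_vars m"
  shows "\<exists>s. stdp m d s \<and> (Poly_Mapping.single t 1 - s :: (nat + nat, 'a::comm_ring_1) mpoly)
           \<in> ideal_gen_in (polys_in_vars (xy_vars m)) (minors2 m d)"
  using assms
proof (induction "mu m d t" arbitrary: t rule: less_induct)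
  case less
  show ?case
  proof (cases "stdm m d t")
    case True
    then show ?thesis using less.prems
      by (intro exI[of _ "Poly_Mapping.single t 1"]) (auto simp: stdp_def R_single)
  next
    case False
    then obtain i j where ij: "1 \<le> i" "i < j" "j \<le> m"
      and ai: "d i \<le> Poly_Mapping.lookup t (Inl i)" and bj: "d j \<le> Poly_Mapping.lookup t (Inr j)"
      unfolding stdm_def by blast
    have i: "i \<in> {1..m}" and j: "j \<in> {1..m}" using ij by auto
    define a where "a = Poly_Mapping.single (Inl i) (d i) + Poly_Mapping.single (Inr j) (d j)"
    define b where "b = Poly_Mapping.single (Inl j) (d j) + Poly_Mapping.single (Inr i) (d i)"
    define r where "r = t - a"
    have t: "t = a + r"
    proof (rule poly_mapping_eqI)
      fix x show "Poly_Mapping.lookup t x = Poly_Mapping.lookup (a + r) x"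
        using ai bj by (auto simp: a_def r_def lookup_add lookup_minus lookup_single when_def)
    qed
    have Vi: "Inl i \<in> xy_vars m" "Inr i \<in> xy_vars m" "Inl j \<in> xy_vars m" "Inr j \<in> xy_vars m"
      using i j unfolding xy_vars_def by auto
    have kr: "Poly_Mapping.keys r \<subseteq> xy_vars m"
    proof
      fix x assume "x \<in> Poly_Mapping.keys r"
      then have "x \<in> Poly_Mapping.keys t" by (auto simp: r_def in_keys_iff lookup_minus)
      then show "x \<in> xy_vars m" using less.prems by blast
    qed
    have kb: "Poly_Mapping.keys (b + r) \<subseteq> xy_vars m"
      using keys_add[of b r] keys_add[of "Poly_Mapping.single (Inl j) (d j)" "Poly_Mapping.single (Inr i) (d i)"]
        kr Vi unfolding b_def by (auto split: if_splits)
    have P: "(\<Prod>k\<in>{1..m}. d k) > 0" using dpos by (auto intro!: prod_pos)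
    have "mu m d (b + r) < mu m d t"
    proof -
      have "mu m d (b + r) = (m + 1 - j) * (\<Prod>k\<in>{1..m}. d k) + mu m d r"
        by (simp add: b_def mu_add mu_Inl[OF j] mu_Inr mult.assoc eP_mult[OF j])
      moreover have "mu m d t = (m + 1 - i) * (\<Prod>k\<in>{1..m}. d k) + mu m d r"
        by (subst t, simp add: a_def mu_add mu_Inl[OF i] mu_Inr mult.assoc eP_mult[OF i])
      moreover have "m + 1 - j < m + 1 - i" using ij by auto
      ultimately show ?thesis using P by simp
    qed
    then obtain s where s: "stdp m d s"
      and sI: "(Poly_Mapping.single (b + r) 1 - s :: (nat + nat, 'a) mpoly) \<in> ideal_gen_in (polys_in_vars (xy_vars m)) (minors2 m d)"
      using less.hyps kb by blast
    define g :: "(nat + nat, 'a) mpoly" where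
      "g = var_pow (Inl i) (d i) * var_pow (Inr j) (d j) - var_pow (Inl j) (d j) * var_pow (Inr i) (d i)"
    have gG: "g \<in> minors2 m d" unfolding g_def minors2_def using ij by blast
    have eq: "Poly_Mapping.single t 1 - s = Poly_Mapping.single r 1 * g + (Poly_Mapping.single (b + r) 1 - s)"
      unfolding g_def var_pow_mult right_diff_distrib mult_single
      by (subst (1) t) (simp add: a_def b_def add_ac)
    have "Poly_Mapping.single r 1 * g \<in> ideal_gen_in (polys_in_vars (xy_vars m)) (minors2 m d)"
      by (rule I_gen[OF gG R_single[OF kr]])
    then show ?thesis using eq s sI I_add by metis
  qed
qed

lemma nf:
  assumes p: "(p :: (nat + nat, 'a::comm_ring_1) mpoly) \<in> polys_in_vars (xy_vars m)"
  shows "\<exists>s. stdp m d s \<and> p - s \<in> ideal_gen_in (polys_in_vars (xy_vars m)) (minors2 m d)"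
proof -
  define S where "S t = (SOME s. stdp m d s \<and> (Poly_Mapping.single t 1 - s :: (nat + nat, 'a) mpoly)
           \<in> ideal_gen_in (polys_in_vars (xy_vars m)) (minors2 m d))" for t
  have S: "stdp m d (S t) \<and> Poly_Mapping.single t 1 - S t \<in> ideal_gen_in (polys_in_vars (xy_vars m)) (minors2 m d)"
    if "t \<in> Poly_Mapping.keys p" for t
  proof -
    have "Poly_Mapping.keys t \<subseteq> xy_vars m" using p that unfolding polys_in_vars_def by blast
    from nf_mon[OF this] show ?thesis unfolding S_def by (rule someI_ex)
  qed
  define s where "s = (\<Sum>t\<in>Poly_Mapping.keys p. Poly_Mapping.single 0 (Poly_Mapping.lookup p t) * S t)"
  have "stdp m d s" unfolding s_def using S by (intro stdp_sum stdp_const_mult) auto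
  moreover have "p - s = (\<Sum>t\<in>Poly_Mapping.keys p. Poly_Mapping.single 0 (Poly_Mapping.lookup p t) * (Poly_Mapping.single t 1 - S t))"
    by (subst (1) poly_expand) (simp add: s_def right_diff_distrib mult_single sum_subtractf)
  moreover have "\<dots> \<in> ideal_gen_in (polys_in_vars (xy_vars m)) (minors2 m d)"
    using S by (intro I_sum I_mult R_const) auto
  ultimately show ?thesis by metis
qed

end


lemma minors_in_R: "minors2 m d \<subseteq> (polys_in_vars (xy_vars m) :: (nat + nat, 'a::comm_ring_1) mpoly set)"
proof
  fix g :: "(nat + nat, 'a) mpoly" assume "g \<in> minors2 m d"
  then obtain i j where ij: "1 \<le> i" "i < j" "j \<le> m"
    and g: "g = var_pow (Inl i) (d i) * var_pow (Inr j) (d j) - var_pow (Inl j) (d j) * var_pow (Inr i) (d i)"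
    unfolding minors2_def by blast
  have Vi: "Inl i \<in> xy_vars m" "Inr i \<in> xy_vars m" "Inl j \<in> xy_vars m" "Inr j \<in> xy_vars m"
    using ij unfolding xy_vars_def by auto
  show "g \<in> polys_in_vars (xy_vars m)" unfolding g
    by (intro R_diff R_mult R_var_pow Vi)
qed

context cop
begin

lemma prime_if:
  "prime_ideal_in (polys_in_vars (xy_vars m) :: (nat + nat, 'a::field) mpoly set)
            (ideal_gen_in (polys_in_vars (xy_vars m)) (minors2 m d))"
proof -
  let ?R = "polys_in_vars (xy_vars m) :: (nat + nat, 'a) mpoly set"
  let ?I = "ideal_gen_in ?R (minors2 m d)"
  have hom: "\<And>s t. psi m d (s + t) = psi m d s + psi m d t" by (rule psi_add)
  have kill: "\<And>p. p \<in> ?I \<Longrightarrow> phi (psi m d) p = 0"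
    by (rule phi_I[OF hom phi_kill]) auto
  have sub: "?I \<subseteq> ?R" by (rule I_subset_R[OF minors_in_R])
  have one: "(1 :: (nat + nat, 'a) mpoly) \<notin> ?I"
  proof
    assume "1 \<in> ?I"
    then have "phi (psi m d) (1 :: (nat + nat, 'a) mpoly) = 0" using kill by blast
    moreover have "phi (psi m d) (1 :: (nat + nat, 'a) mpoly) = 1"
      using phi_single[of "psi m d" 0 "1::'a"] by simp
    ultimately show False by simp
  qed
  have zero: "p \<in> ?I" if p: "p \<in> ?R" "phi (psi m d) p = 0" for p
  proof -
    obtain s where s: "stdp m d s" "p - s \<in> ?I" using nf[OF p(1)] by blast
    have "phi (psi m d) (p - s) = 0" using kill[OF s(2)] .
    then have "phi (psi m d) s = 0" using p(2) by (simp add: phi_diff)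
    moreover have "\<And>t. t \<in> Poly_Mapping.keys s \<Longrightarrow> Poly_Mapping.keys t \<subseteq> xy_vars m \<and> stdm m d t"
      using s(1) unfolding stdp_def polys_in_vars_def by blast
    ultimately have "s = 0" using phi_inj by blast
    then show ?thesis using s(2) by simp
  qed
  have "\<forall>a\<in>?R. \<forall>b\<in>?R. a * b \<in> ?I \<longrightarrow> a \<in> ?I \<or> b \<in> ?I"
  proof (intro ballI impI)
    fix a b assume a: "a \<in> ?R" and b: "b \<in> ?R" and ab: "a * b \<in> ?I"
    have "phi (psi m d) a * phi (psi m d) b = 0"
      using kill[OF ab] by (simp add: phi_mult[OF hom])
    then have "phi (psi m d) a = 0 \<or> phi (psi m d) b = 0" by simp
    then show "a \<in> ?I \<or> b \<in> ?I" using zero a b by blast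
  qed
  then show ?thesis unfolding prime_ideal_in_def using sub one by blast
qed

end


definition Ep :: "nat \<Rightarrow> ('v \<Rightarrow>\<^sub>0 nat) \<Rightarrow> ('v \<Rightarrow>\<^sub>0 nat)" where
  "Ep n u = (\<Sum>_<n. u)"

lemma lookup_Ep: "Poly_Mapping.lookup (Ep n u) x = n * Poly_Mapping.lookup u x"
  by (simp add: Ep_def lookup_sum)

lemma single_pow: "(Poly_Mapping.single u (1::'a::comm_ring_1)) ^ n = Poly_Mapping.single (Ep n u) 1"
  by (induction n) (simp_all add: Ep_def mult_single add.commute)

definition big :: "nat \<Rightarrow> (nat \<Rightarrow> nat) \<Rightarrow> (nat + nat \<Rightarrow>\<^sub>0 nat) \<Rightarrow> bool" where
  "big m d t \<longleftrightarrow> (\<exists>k l. 1 \<le> k \<and> k < l \<and> l \<le> m \<and>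
      d k \<le> Poly_Mapping.lookup t (Inl k) + Poly_Mapping.lookup t (Inr k) \<and>
      d l \<le> Poly_Mapping.lookup t (Inl l) + Poly_Mapping.lookup t (Inr l))"

lemma big_add: "big m d b \<Longrightarrow> big m d (a + b)"
  unfolding big_def lookup_add by (elim exE conjE, intro exI conjI) auto

lemma I_big:
  assumes "(p :: (nat + nat, 'a::comm_ring_1) mpoly) \<in> ideal_gen_in R (minors2 m d)"
    and "t \<in> Poly_Mapping.keys p"
  shows "big m d t"
proof -
  obtain F c where F: "finite F" "F \<subseteq> minors2 m d" "p = (\<Sum>g\<in>F. c g * g)"
    using assms(1) unfolding ideal_gen_in_def by blast
  obtain g where g: "g \<in> F" "t \<in> Poly_Mapping.keys (c g * g)"
    using keys_sum[of "\<lambda>g. c g * g" F] assms(2) F(3) by blast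
  obtain a b where ab: "t = a + b" "b \<in> Poly_Mapping.keys g"
    using keys_mult[of "c g" g] g(2) by blast
  obtain i j where ij: "1 \<le> i" "i < j" "j \<le> m"
    and gd: "g = var_pow (Inl i) (d i) * var_pow (Inr j) (d j) - var_pow (Inl j) (d j) * var_pow (Inr i) (d i)"
    using F(2) g(1) unfolding minors2_def by blast
  have "b = Poly_Mapping.single (Inl i) (d i) + Poly_Mapping.single (Inr j) (d j) \<or>
           b = Poly_Mapping.single (Inl j) (d j) + Poly_Mapping.single (Inr i) (d i)"
    using ab(2) keys_diff unfolding gd var_pow_mult by (fastforce split: if_splits)
  then have "big m d b"
  proof
    assume b: "b = Poly_Mapping.single (Inl i) (d i) + Poly_Mapping.single (Inr j) (d j)"
    show ?thesis unfolding big_def b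
      by (intro exI[of _ i] exI[of _ j]) (use ij in \<open>auto simp: lookup_add lookup_single when_def\<close>)
  next
    assume b: "b = Poly_Mapping.single (Inl j) (d j) + Poly_Mapping.single (Inr i) (d i)"
    show ?thesis unfolding big_def b
      by (intro exI[of _ i] exI[of _ j]) (use ij in \<open>auto simp: lookup_add lookup_single when_def\<close>)
  qed
  then show ?thesis using ab(1) big_add by simp
qed

lemma not_prime:
  fixes m :: nat and d :: "nat \<Rightarrow> nat" and i j :: nat
  assumes dpos: "\<And>i. 1 \<le> i \<Longrightarrow> i \<le> m \<Longrightarrow> d i > 0"
    and ij: "1 \<le> i" "i < j" "j \<le> m" and gne: "gcd (d i) (d j) \<noteq> 1"
  shows "\<not> prime_ideal_in (polys_in_vars (xy_vars m) :: (nat + nat, 'a::comm_ring_1) mpoly set)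
            (ideal_gen_in (polys_in_vars (xy_vars m)) (minors2 m d))"
proof
  let ?R = "polys_in_vars (xy_vars m) :: (nat + nat, 'a) mpoly set"
  let ?I = "ideal_gen_in ?R (minors2 m d)"
  assume pr: "prime_ideal_in ?R ?I"
  define gg where "gg = gcd (d i) (d j)"
  have di: "d i > 0" and dj: "d j > 0" using dpos ij by auto
  have "gg > 0" unfolding gg_def using di by simp
  then have gg1: "gg > 1" using gne unfolding gg_def by linarith
  obtain qi where qi: "d i = gg * qi" unfolding gg_def by (meson gcd_dvd1 dvdE)
  obtain qj where qj: "d j = gg * qj" unfolding gg_def by (meson gcd_dvd2 dvdE)
  have qipos: "qi > 0" and qjpos: "qj > 0" using qi qj di dj by auto
  obtain n0 where n0: "gg = Suc n0" using gg1 by (cases gg) auto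
  define u where "u = Poly_Mapping.single (Inl i) qi + Poly_Mapping.single (Inr j) qj"
  define w where "w = Poly_Mapping.single (Inl j) qj + Poly_Mapping.single (Inr i) qi"
  define U :: "(nat + nat, 'a) mpoly" where "U = Poly_Mapping.single u 1"
  define W :: "(nat + nat, 'a) mpoly" where "W = Poly_Mapping.single w 1"
  have Vi: "Inl i \<in> xy_vars m" "Inr i \<in> xy_vars m" "Inl j \<in> xy_vars m" "Inr j \<in> xy_vars m"
    using ij unfolding xy_vars_def by auto
  have ku: "Poly_Mapping.keys u \<subseteq> xy_vars m" "Poly_Mapping.keys w \<subseteq> xy_vars m"
    using keys_add[of "Poly_Mapping.single (Inl i) qi" "Poly_Mapping.single (Inr j) qj"]
      keys_add[of "Poly_Mapping.single (Inl j) qj" "Poly_Mapping.single (Inr i) qi"] Vi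
    unfolding u_def w_def by (auto split: if_splits)
  have UR: "U \<in> ?R" "W \<in> ?R" unfolding U_def W_def using ku by (auto intro: R_single)
  have lu: "Poly_Mapping.lookup u x = (if x = Inl i then qi else if x = Inr j then qj else 0)" for x
    using ij by (auto simp: u_def lookup_add lookup_single when_def)
  have lw: "Poly_Mapping.lookup w x = (if x = Inl j then qj else if x = Inr i then qi else 0)" for x
    using ij by (auto simp: w_def lookup_add lookup_single when_def)
  have Epu: "Ep gg u = Poly_Mapping.single (Inl i) (d i) + Poly_Mapping.single (Inr j) (d j)"
    by (rule poly_mapping_eqI) (use ij in \<open>auto simp: lookup_Ep lu lookup_add lookup_single when_def qi qj\<close>)
  have Epw: "Ep gg w = Poly_Mapping.single (Inl j) (d j) + Poly_Mapping.single (Inr i) (d i)"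
    by (rule poly_mapping_eqI) (use ij in \<open>auto simp: lookup_Ep lw lookup_add lookup_single when_def qi qj\<close>)
  define B where "B = (\<Sum>p<Suc n0. U ^ p * W ^ (n0 - p))"
  have gen: "U ^ gg - W ^ gg \<in> minors2 m d"
    unfolding U_def W_def single_pow Epu Epw minors2_def var_pow_mult[symmetric] using ij by blast
  have "(U - W) * B \<in> ?I"
    using I_gen[OF gen R_one] unfolding B_def n0 diff_power_eq_sum[symmetric] by simp
  moreover have "U - W \<in> ?R" using UR by (intro R_diff)
  moreover have "B \<in> ?R" unfolding B_def by (intro R_sum R_mult R_pow UR)
  ultimately have "U - W \<in> ?I \<or> B \<in> ?I" using pr unfolding prime_ideal_in_def by blast
  moreover have "U - W \<notin> ?I"
  proof
    assume "U - W \<in> ?I"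
    moreover have "u \<noteq> w" using lu[of "Inl i"] lw[of "Inl i"] ij qipos by auto
    then have "u \<in> Poly_Mapping.keys (U - W)" by (simp add: U_def W_def in_keys_iff lookup_minus lookup_single when_def)
    ultimately have "big m d u" by (rule I_big)
    then obtain k l where kl: "1 \<le> k" "k < l" "l \<le> m"
      "d k \<le> Poly_Mapping.lookup u (Inl k) + Poly_Mapping.lookup u (Inr k)"
      "d l \<le> Poly_Mapping.lookup u (Inl l) + Poly_Mapping.lookup u (Inr l)"
      unfolding big_def by blast
    have "d k > 0" "d l > 0" using kl dpos by auto
    then show False using kl(4,5) kl(2) gg1 qi qj qipos qjpos unfolding lu
      by (auto split: if_splits)
  qed
  moreover have "B \<notin> ?I"
  proof
    assume "B \<in> ?I"
    moreover have "Poly_Mapping.lookup B (Ep n0 w) = 1"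
    proof -
      have "Poly_Mapping.lookup B (Ep n0 w) = (\<Sum>p<Suc n0. (if p = 0 then 1 else 0))"
        unfolding B_def lookup_sum
      proof (rule sum.cong)
        fix p assume "p \<in> {..<Suc n0}"
        have "Ep p u + Ep (n0 - p) w = Ep n0 w \<longleftrightarrow> p = 0"
        proof
          assume "Ep p u + Ep (n0 - p) w = Ep n0 w"
          then have "Poly_Mapping.lookup (Ep p u + Ep (n0 - p) w) (Inl i) = Poly_Mapping.lookup (Ep n0 w) (Inl i)"
            by simp
          then show "p = 0" using ij qipos by (simp add: lookup_add lookup_Ep lu lw)
        qed (simp add: Ep_def)
        then show "Poly_Mapping.lookup (U ^ p * W ^ (n0 - p)) (Ep n0 w) = (if p = 0 then 1 else 0)"
          unfolding U_def W_def single_pow mult_single by (auto simp: lookup_single when_def)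
      qed simp
      also have "\<dots> = 1" by (simp add: sum.delta)
      finally show ?thesis .
    qed
    then have "Ep n0 w \<in> Poly_Mapping.keys B" by (simp add: in_keys_iff)
    ultimately have "big m d (Ep n0 w)" by (rule I_big)
    then obtain k l where kl: "1 \<le> k" "k < l" "l \<le> m"
      "d k \<le> Poly_Mapping.lookup (Ep n0 w) (Inl k) + Poly_Mapping.lookup (Ep n0 w) (Inr k)"
      "d l \<le> Poly_Mapping.lookup (Ep n0 w) (Inl l) + Poly_Mapping.lookup (Ep n0 w) (Inr l)"
      unfolding big_def by blast
    have "d k > 0" "d l > 0" using kl dpos by auto
    moreover have "n0 * qi < d i" "n0 * qj < d j" using qi qj n0 qipos qjpos by auto
    ultimately show False using kl(4,5) kl(2) unfolding lookup_Ep lw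
      by (auto split: if_splits)
  qed
  ultimately show False by blast
qed

theorem proposition4p9:
  fixes m :: nat and d :: "nat \<Rightarrow> nat"
  assumes "m \<ge> 2"
    and "\<And>i. 1 \<le> i \<Longrightarrow> i \<le> m \<Longrightarrow> d i > 0"
  shows "prime_ideal_in (polys_in_vars (xy_vars m) :: (nat + nat, 'a::field) mpoly set)
            (ideal_gen_in (polys_in_vars (xy_vars m)) (minors2 m d))
         \<longleftrightarrow> (\<forall>i j. 1 \<le> i \<and> i < j \<and> j \<le> m \<longrightarrow> gcd (d i) (d j) = 1)"
proof
  assume pr: "prime_ideal_in (polys_in_vars (xy_vars m) :: (nat + nat, 'a::field) mpoly set)
            (ideal_gen_in (polys_in_vars (xy_vars m)) (minors2 m d))"
  show "\<forall>i j. 1 \<le> i \<and> i < j \<and> j \<le> m \<longrightarrow> gcd (d i) (d j) = 1"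
  proof (intro allI impI)
    fix i j assume ij: "1 \<le> i \<and> i < j \<and> j \<le> m"
    show "gcd (d i) (d j) = 1"
    proof (rule ccontr)
      assume G: "gcd (d i) (d j) \<noteq> 1"
      have "\<not> prime_ideal_in (polys_in_vars (xy_vars m) :: (nat + nat, 'a::field) mpoly set)
            (ideal_gen_in (polys_in_vars (xy_vars m)) (minors2 m d))"
        using ij by (intro not_prime[OF assms(2) _ _ _ G]) auto
      then show False using pr by blast
    qed
  qed
next
  assume "\<forall>i j. 1 \<le> i \<and> i < j \<and> j \<le> m \<longrightarrow> gcd (d i) (d j) = 1"
  then interpret cop m d using assms(2) by unfold_locales auto
  show "prime_ideal_in (polys_in_vars (xy_vars m) :: (nat + nat, 'a::field) mpoly set)
            (ideal_gen_in (polys_in_vars (xy_vars m)) (minors2 m d))"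
    by (rule prime_if)
qed

end
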